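(* For any two symmetric positive definite matrices $\mathbb A,\mathbb B\in\mathbb R^{d\times d}$, $$\mathrm{tr}\big((\log\mathbb A-\log\mathbb B)^2\big)\le-\mathrm{tr}\big((\mathbb A-\mathbb B)(\mathbb A^{-1}-\mathbb B^{-1})\big),$$ and consequently $$|\mathrm{tr}(\log\mathbb A)-\mathrm{tr}(\log\mathbb B)|^2\le-d\,\mathrm{tr}\big((\mathbb A-\mathbb B)(\mathbb A^{-1}-\mathbb B^{-1})\big).$$
   Context: For a symmetric positive definite $\mathbb A=\mathbb O\,\mathrm{diag}(\lambda_i)\mathbb O^{\rm T}$ ($\mathbb O$ orthogonal, $\lambda_i>0$), $\log\mathbb A=\mathbb O\,\mathrm{diag}(\log\lambda_i)\mathbb O^{\rm T}$. *)

theory Defs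
  imports "HOL-Analysis.Analysis"
begin

definition diag_mat :: "real^'n \<Rightarrow> real^'n^'n" where
  "diag_mat v = (\<chi> i j. if i = j then v $ i else 0)"

definition spd :: "real^'n^'n \<Rightarrow> bool" where
  "spd A \<longleftrightarrow> transpose A = A \<and> (\<forall>x. x \<noteq> 0 \<longrightarrow> x \<bullet> (A *v x) > 0)"

text \<open>Matrix logarithm of an SPD matrix via orthogonal diagonalisation
  A = O diag(lambda) O^T, log A = O diag(log lambda) O^T (well defined,
  independent of the choice of diagonalisation).\<close>
definition mat_log :: "real^'n^'n \<Rightarrow> real^'n^'n" where
  "mat_log A = (SOME L. \<exists>Q lam. orthogonal_matrix Q \<and> (\<forall>i. lam $ i > 0) \<and>
       A = Q ** diag_mat lam ** transpose Q \<and>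
       L = Q ** diag_mat (\<chi> i. ln (lam $ i)) ** transpose Q)"

end

theory Submission
  imports Defs "HOL-Analysis.Analysis"
begin


lemma quad_zero:
  fixes a b :: real
  assumes "\<And>t. a * t + b * t^2 \<le> 0"
  shows "a = 0"
proof (rule ccontr)
  assume a: "a \<noteq> 0"
  define c where "c = 2 * (\<bar>b\<bar> + 1)"
  have c: "c > 0" by (simp add: c_def add_pos_nonneg)
  have "a * (a/c) + b * (a/c)^2 \<le> 0" by (rule assms)
  moreover have "a * (a/c) + b * (a/c)^2 = a^2/c^2 * (c + b)"
    using c by (simp add: field_simps power2_eq_square)
  moreover have "a^2/c^2 > 0" using a c by simp
  moreover have "c + b > 0" unfolding c_def by (cases "b \<ge> 0") auto
  ultimately show False by (metis mult_pos_pos not_le)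
qed

lemma sym_dot:
  fixes A :: "real^'n^'n"
  assumes "transpose A = A"
  shows "x \<bullet> (A *v y) = (A *v x) \<bullet> y"
  by (metis assms dot_lmul_matrix transpose_matrix_vector)

lemma eig_exists:
  fixes A :: "real^'n^'n"
  assumes sym: "transpose A = A" and S: "subspace S" and inv: "\<And>x. x \<in> S \<Longrightarrow> A *v x \<in> S"
    and x0: "x0 \<in> S" "x0 \<noteq> 0"
  shows "\<exists>v\<in>S. norm v = 1 \<and> A *v v = (v \<bullet> (A *v v)) *\<^sub>R v"
proof -
  define f where "f = (\<lambda>x::real^'n. x \<bullet> (A *v x))"
  define K where "K = S \<inter> sphere 0 1"
  have "compact K" unfolding K_def
    using closed_Int_compact[OF closed_subspace[OF S] compact_sphere[of 0 1]] by simp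
  moreover have "x0 /\<^sub>R norm x0 \<in> K" unfolding K_def using x0 S
    by (simp add: subspace_scale)
  hence "K \<noteq> {}" by auto
  moreover have "continuous_on K f" unfolding f_def
    by (intro continuous_intros linear_continuous_on) (simp add: linear_conv_bounded_linear)
  ultimately obtain v where v: "v \<in> K" and vmax: "\<And>y. y \<in> K \<Longrightarrow> f y \<le> f v"
    using continuous_attains_sup by metis
  define l where "l = f v"
  have vS: "v \<in> S" and nv: "norm v = 1" using v by (auto simp: K_def)
  have bound: "f y \<le> l * (norm y)^2" if y: "y \<in> S" for y
  proof (cases "y = 0")
    case True then show ?thesis by (simp add: f_def)
  next
    case False
    have "y /\<^sub>R norm y \<in> K" using y S False by (simp add: K_def subspace_scale)
    hence "f (y /\<^sub>R norm y) \<le> l" using vmax l_def by auto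
    moreover have "f (y /\<^sub>R norm y) = f y / (norm y)^2"
      by (simp add: f_def matrix_vector_mult_scaleR power2_eq_square field_simps)
    ultimately show ?thesis using False by (simp add: divide_le_eq)
  qed
  have key: "w \<bullet> (A *v v) - l * (w \<bullet> v) = 0" if w: "w \<in> S" for w
  proof -
    have "2 * (w \<bullet> (A *v v) - l * (w \<bullet> v)) = 0"
    proof (rule quad_zero)
      fix t :: real
      have yS: "v + t *\<^sub>R w \<in> S" using S vS w by (simp add: subspace_add subspace_scale)
      have e1: "f (v + t *\<^sub>R w) = l + 2 * t * (w \<bullet> (A *v v)) + t^2 * f w"
        unfolding f_def l_def using sym_dot[OF sym, of v w]
        by (simp add: matrix_vector_right_distrib matrix_vector_mult_scaleR inner_add_left inner_add_right
              inner_commute power2_eq_square algebra_simps)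
      have e2: "(norm (v + t *\<^sub>R w))^2 = 1 + 2 * t * (w \<bullet> v) + t^2 * (norm w)^2"
      proof -
        have "v \<bullet> v = 1" using nv by (simp add: norm_eq_1)
        moreover have "w \<bullet> w = (norm w)^2" by (simp add: power2_norm_eq_inner)
        ultimately show ?thesis unfolding power2_norm_eq_inner
          by (simp add: inner_add_left inner_add_right inner_commute power2_eq_square algebra_simps)
      qed
      have "f (v + t *\<^sub>R w) \<le> l * (norm (v + t *\<^sub>R w))^2" by (rule bound[OF yS])
      moreover have "f w \<le> l * (norm w)^2" by (rule bound[OF w])
      ultimately show "2 * (w \<bullet> (A *v v) - l * (w \<bullet> v)) * t + (f w - l * (norm w)^2) * t^2 \<le> 0"
        using e1 e2 by (simp add: algebra_simps)
    qed
    thus ?thesis by simp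
  qed
  define w where "w = A *v v - l *\<^sub>R v"
  have "w \<in> S" unfolding w_def using S inv vS by (simp add: subspace_diff subspace_scale)
  from key[OF this] have "w \<bullet> w = 0" unfolding w_def
    by (simp add: inner_diff_left inner_diff_right algebra_simps)
  hence "A *v v = l *\<^sub>R v" unfolding w_def by simp
  thus ?thesis using vS nv l_def f_def by auto
qed




lemma sum_delta_mult:
  fixes f c :: "'n::finite \<Rightarrow> real"
  shows "(\<Sum>k\<in>UNIV. f k * (if k = j then c k else 0)) = f j * c j"
proof -
  have "(\<Sum>k\<in>UNIV. f k * (if k = j then c k else 0)) = (\<Sum>k\<in>UNIV. if k = j then f k * c k else 0)"
    by (rule sum.cong) auto
  thus ?thesis by (simp add: sum.delta')
qed

lemma sum_delta_mult2:
  fixes f c :: "'n::finite \<Rightarrow> real"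
  shows "(\<Sum>k\<in>UNIV. (if j = k then c k else 0) * f k) = c j * f j"
proof -
  have "(\<Sum>k\<in>UNIV. (if j = k then c k else 0) * f k) = (\<Sum>k\<in>UNIV. if j = k then c k * f k else 0)"
    by (rule sum.cong) auto
  thus ?thesis by (simp add: sum.delta)
qed

lemma spec_sub:
  fixes A :: "real^'n^'n"
  assumes sym: "transpose A = A"
  shows "subspace S \<Longrightarrow> (\<And>x. x \<in> S \<Longrightarrow> A *v x \<in> S) \<Longrightarrow>
    \<exists>B. B \<subseteq> S \<and> finite B \<and> pairwise orthogonal B \<and> (\<forall>x\<in>B. norm x = 1) \<and> S \<subseteq> span B \<and>
        (\<forall>x\<in>B. \<exists>c. A *v x = c *\<^sub>R x)"
proof (induction "dim S" arbitrary: S rule: less_induct)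
  case less
  show ?case
  proof (cases "S \<subseteq> {0}")
    case True
    then show ?thesis by (intro exI[of _ "{}"]) auto
  next
    case False
    then obtain x0 where x0: "x0 \<in> S" "x0 \<noteq> 0" by auto
    obtain v where vS: "v \<in> S" and nv: "norm v = 1" and ev: "A *v v = (v \<bullet> (A *v v)) *\<^sub>R v"
      using eig_exists[OF sym less.prems(1) less.prems(2) x0] by blast
    define l where "l = v \<bullet> (A *v v)"
    define S' where "S' = S \<inter> {x. v \<bullet> x = 0}"
    have sub': "subspace S'" unfolding S'_def
      using subspace_inter[OF less.prems(1) subspace_orthogonal_to_vector[of v]]
      by (simp add: orthogonal_def)
    have inv': "A *v x \<in> S'" if "x \<in> S'" for x
    proof -
      have "v \<bullet> (A *v x) = (A *v v) \<bullet> x" by (rule sym_dot[OF sym])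
      also have "\<dots> = (l *\<^sub>R v) \<bullet> x" using ev l_def by metis
      also have "\<dots> = l * (v \<bullet> x)" by simp
      finally show ?thesis using that less.prems(2) by (simp add: S'_def)
    qed
    have "v \<notin> S'" using nv by (simp add: S'_def norm_eq_1)
    hence "S' \<subset> S" using vS unfolding S'_def by blast
    hence "dim S' < dim S"
    proof -
      have e1: "span S' = S'" using sub' by (rule span_eq_iff[THEN iffD2])
      have e2: "span S = S" using less.prems(1) by (rule span_eq_iff[THEN iffD2])
      show ?thesis using dim_psubset[of S' S] \<open>S' \<subset> S\<close> unfolding e1 e2 by blast
    qed
    from less.hyps[OF this sub' inv'] obtain B where
      B: "B \<subseteq> S'" "finite B" "pairwise orthogonal B" "\<forall>x\<in>B. norm x = 1" "S' \<subseteq> span B"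
         "\<forall>x\<in>B. \<exists>c. A *v x = c *\<^sub>R x" by blast
    have vB: "v \<notin> B" using B(1) nv unfolding S'_def by (auto simp: norm_eq_1)
    show ?thesis
    proof (intro exI[of _ "insert v B"] conjI)
      show "insert v B \<subseteq> S" using B(1) vS S'_def by auto
      show "finite (insert v B)" using B(2) by simp
      show "pairwise orthogonal (insert v B)"
        using B(1,3) unfolding S'_def pairwise_insert
        by (auto simp: orthogonal_def inner_commute)
      show "\<forall>x\<in>insert v B. norm x = 1" using B(4) nv by auto
      show "\<forall>x\<in>insert v B. \<exists>c. A *v x = c *\<^sub>R x" using B(6) ev by blast
      show "S \<subseteq> span (insert v B)"
      proof
        fix x assume xS: "x \<in> S"
        have "x - (v \<bullet> x) *\<^sub>R v \<in> S'" unfolding S'_def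
          using xS vS less.prems(1) nv
          by (simp add: subspace_diff subspace_scale inner_diff_right norm_eq_1)
        hence "x - (v \<bullet> x) *\<^sub>R v \<in> span (insert v B)"
          using B(5) span_mono[of B "insert v B"] by auto
        moreover have "(v \<bullet> x) *\<^sub>R v \<in> span (insert v B)"
          by (simp add: span_base span_scale)
        ultimately have "(x - (v \<bullet> x) *\<^sub>R v) + (v \<bullet> x) *\<^sub>R v \<in> span (insert v B)"
          by (rule span_add)
        thus "x \<in> span (insert v B)" by simp
      qed
    qed
  qed
qed

lemma spectral:
  fixes A :: "real^'n^'n"
  assumes sym: "transpose A = A"
  shows "\<exists>Q lam. orthogonal_matrix Q \<and> A ** Q = Q ** (\<chi> i j. if i = j then lam $ i else 0)
                  \<and> (\<forall>j. A *v column j Q = (lam $ j) *\<^sub>R column j Q) \<and> (\<forall>j. norm (column j Q) = 1)"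
proof -
  obtain B where B: "finite B" "pairwise orthogonal B" "\<forall>x\<in>B. norm x = 1" "UNIV \<subseteq> span B"
         "\<forall>x\<in>B. \<exists>c. A *v x = c *\<^sub>R x"
    using spec_sub[OF sym, of UNIV] by auto
  have "0 \<notin> B" using B(3) by force
  hence ind: "independent B" using pairwise_orthogonal_independent[OF B(2)] by blast
  have "card B = dim (span B)" using dim_span_eq_card_independent[OF ind] by simp
  also have "span B = UNIV" using B(4) by auto
  finally have "card B = CARD('n)" by simp
  then obtain g where g: "bij_betw g (UNIV::'n set) B"
    using finite_same_card_bij[of "UNIV::'n set" B] B(1) by auto
  have gB: "g j \<in> B" for j using g bij_betwE by blast
  have ginj: "g j = g k \<Longrightarrow> j = k" for j k using g unfolding bij_betw_def inj_on_def by blast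
  define Q :: "real^'n^'n" where "Q = (\<chi> i j. g j $ i)"
  have colQ: "column j Q = g j" for j unfolding Q_def column_def by (simp add: vec_eq_iff)
  have "\<forall>j. \<exists>c. A *v g j = c *\<^sub>R g j" using B(5) gB by blast
  then obtain lam where lam: "\<And>j. A *v g j = lam j *\<^sub>R g j"
    using choice[of "\<lambda>j c. A *v g j = c *\<^sub>R g j"] by blast
  define lv :: "real^'n" where "lv = (\<chi> j. lam j)"
  have "transpose Q ** Q = mat 1"
  proof -
    have "(transpose Q ** Q) $ j $ k = g j \<bullet> g k" for j k
      unfolding Q_def transpose_def matrix_matrix_mult_def inner_vec_def by simp
    moreover have "g j \<bullet> g k = (if j = k then 1 else 0)" for j k
    proof (cases "j = k")
      case True then show ?thesis using B(3) gB by (simp add: norm_eq_1)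
    next
      case False
      hence "g j \<noteq> g k" using ginj by blast
      then show ?thesis using B(2) gB False unfolding pairwise_def orthogonal_def by simp
    qed
    ultimately show ?thesis by (simp add: mat_def vec_eq_iff)
  qed
  hence oQ: "orthogonal_matrix Q" by (simp add: orthogonal_matrix)
  have "A ** Q = Q ** (\<chi> i j. if i = j then lv $ i else 0)"
  proof -
    have "(A ** Q) $ i $ j = (A *v g j) $ i" for i j
      unfolding Q_def matrix_matrix_mult_def matrix_vector_mult_def by simp
    moreover have "(Q ** (\<chi> i j. if i = j then lv $ i else 0)) $ i $ j = lam j * g j $ i" for i j
      unfolding Q_def matrix_matrix_mult_def lv_def
      by (simp add: sum_delta_mult)
    ultimately show ?thesis using lam by (simp add: vec_eq_iff)
  qed
  moreover have "\<forall>j. A *v column j Q = (lv $ j) *\<^sub>R column j Q" using lam colQ lv_def by simp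
  moreover have "\<forall>j. norm (column j Q) = 1" using colQ B(3) gB by simp
  ultimately show ?thesis using oQ by blast
qed



lemma diag_left: "(diag_mat a ** M) $ i $ k = a $ i * M $ i $ k"
  unfolding diag_mat_def matrix_matrix_mult_def by (simp add: sum_delta_mult2)

lemma diag_right: "(M ** diag_mat b) $ i $ k = M $ i $ k * b $ k"
  unfolding diag_mat_def matrix_matrix_mult_def by (simp add: sum_delta_mult)

lemma diag_mult: "diag_mat a ** diag_mat b = diag_mat (\<chi> i. a $ i * b $ i)"
  by (simp add: vec_eq_iff diag_left) (simp add: diag_mat_def)

lemma diag_one: "diag_mat (\<chi> i. 1) = mat 1"
  by (simp add: diag_mat_def mat_def vec_eq_iff)

lemma diag_transpose: "transpose (diag_mat a) = diag_mat a"
  by (simp add: diag_mat_def transpose_def vec_eq_iff)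

lemma matrix_sub_ldistrib: "(A::real^'n^'m) ** (B - C) = A ** B - A ** C"
  by (simp add: vec_eq_iff matrix_matrix_mult_def right_diff_distrib sum_subtractf)

lemma matrix_sub_rdistrib: "((A::real^'n^'m) - B) ** C = A ** C - B ** C"
  by (simp add: vec_eq_iff matrix_matrix_mult_def left_diff_distrib sum_subtractf)

lemma trace_diag_sandwich:
  fixes C :: "real^'n^'n"
  shows "trace (diag_mat a ** C ** diag_mat b ** transpose C) =
         (\<Sum>i\<in>UNIV. \<Sum>j\<in>UNIV. (C $ i $ j)^2 * a $ i * b $ j)"
proof -
  have "trace (diag_mat a ** C ** diag_mat b ** transpose C) =
        trace (diag_mat a ** (C ** diag_mat b ** transpose C))" by (simp add: matrix_mul_assoc)
  also have "\<dots> = (\<Sum>i\<in>UNIV. a $ i * (\<Sum>j\<in>UNIV. C $ i $ j * b $ j * C $ i $ j))"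
  proof -
    have "(C ** diag_mat b ** transpose C) $ i $ i = (\<Sum>j\<in>UNIV. C $ i $ j * b $ j * C $ i $ j)" for i
      unfolding matrix_matrix_mult_def[of "C ** diag_mat b" "transpose C"]
      by (simp add: diag_right transpose_def)
    thus ?thesis unfolding trace_def diag_left by simp
  qed
  also have "\<dots> = (\<Sum>i\<in>UNIV. \<Sum>j\<in>UNIV. (C $ i $ j)^2 * a $ i * b $ j)"
    by (simp add: sum_distrib_left power2_eq_square mult_ac)
  finally show ?thesis .
qed

lemma trace_K:
  fixes Q P :: "real^'n^'n"
  shows "trace ((Q ** diag_mat a ** transpose Q) ** (P ** diag_mat b ** transpose P)) =
         (\<Sum>i\<in>UNIV. \<Sum>j\<in>UNIV. ((transpose Q ** P) $ i $ j)^2 * a $ i * b $ j)"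
proof -
  have "trace ((Q ** diag_mat a ** transpose Q) ** (P ** diag_mat b ** transpose P)) =
        trace (Q ** (diag_mat a ** transpose Q ** P ** diag_mat b ** transpose P))"
    by (simp add: matrix_mul_assoc)
  also have "\<dots> = trace ((diag_mat a ** transpose Q ** P ** diag_mat b ** transpose P) ** Q)"
    by (rule trace_mul_sym)
  also have "\<dots> = trace (diag_mat a ** (transpose Q ** P) ** diag_mat b ** transpose (transpose Q ** P))"
    by (simp add: matrix_mul_assoc matrix_transpose_mul)
  finally show ?thesis by (simp add: trace_diag_sandwich)
qed




lemma delta3:
  fixes f :: "'n::finite \<Rightarrow> real"
  shows "(\<Sum>j\<in>UNIV. (if i = j then 1 else 0) * x * f j) = x * f i"
proof -
  have "(\<Sum>j\<in>UNIV. (if i = j then 1 else 0) * x * f j) = (\<Sum>j\<in>UNIV. if i = j then x * f j else 0)"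
    by (rule sum.cong) auto
  thus ?thesis by (simp add: sum.delta)
qed

lemma orth_rows:
  fixes C :: "real^'n^'n" assumes "orthogonal_matrix C"
  shows "(\<Sum>j\<in>UNIV. (C $ i $ j)^2) = 1"
proof -
  have "(C ** transpose C) $ i $ i = 1" using assms by (simp add: orthogonal_matrix_def mat_def)
  thus ?thesis by (simp add: matrix_matrix_mult_def transpose_def power2_eq_square)
qed

lemma orth_cols:
  fixes C :: "real^'n^'n" assumes "orthogonal_matrix C"
  shows "(\<Sum>i\<in>UNIV. (C $ i $ j)^2) = 1"
proof -
  have "(transpose C ** C) $ j $ j = 1" using assms by (simp add: orthogonal_matrix_def mat_def)
  thus ?thesis by (simp add: matrix_matrix_mult_def transpose_def power2_eq_square)
qed

lemma trace_G:
  fixes Q P :: "real^'n^'n"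
  assumes oQ: "orthogonal_matrix Q" and oP: "orthogonal_matrix P"
  defines "C \<equiv> transpose Q ** P"
  shows "trace ((Q ** diag_mat a ** transpose Q - P ** diag_mat b ** transpose P) **
                (Q ** diag_mat c ** transpose Q - P ** diag_mat d ** transpose P)) =
         (\<Sum>i\<in>UNIV. \<Sum>j\<in>UNIV. (C $ i $ j)^2 * ((a $ i - b $ j) * (c $ i - d $ j)))"
proof -
  have oC: "orthogonal_matrix C" unfolding C_def using oQ oP by (simp add: orthogonal_matrix_mul)
  have QQ: "transpose Q ** Q = mat 1" and PP: "transpose P ** P = mat 1"
    using oQ oP by (simp_all add: orthogonal_matrix_def)
  have tPQ: "(transpose P ** Q) $ i $ j = C $ j $ i" for i j
    unfolding C_def by (simp add: matrix_matrix_mult_def transpose_def mult.commute)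
  have t1: "trace ((Q ** diag_mat a ** transpose Q) ** (Q ** diag_mat c ** transpose Q)) =
           (\<Sum>i\<in>UNIV. \<Sum>j\<in>UNIV. (C $ i $ j)^2 * (a $ i * c $ i))"
  proof -
    have "trace ((Q ** diag_mat a ** transpose Q) ** (Q ** diag_mat c ** transpose Q)) =
          (\<Sum>i\<in>UNIV. \<Sum>j\<in>UNIV. ((mat 1 :: real^'n^'n) $ i $ j)^2 * a $ i * c $ j)"
      unfolding trace_K QQ ..
    also have "\<dots> = (\<Sum>i\<in>UNIV. a $ i * c $ i)"
      by (simp add: mat_def if_distrib[of "\<lambda>x. x^2"] delta3
           cong: if_cong)
    also have "\<dots> = (\<Sum>i\<in>UNIV. \<Sum>j\<in>UNIV. (C $ i $ j)^2 * (a $ i * c $ i))"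
      using orth_rows[OF oC] by (simp add: sum_distrib_right[symmetric])
    finally show ?thesis .
  qed
  have t4: "trace ((P ** diag_mat b ** transpose P) ** (P ** diag_mat d ** transpose P)) =
           (\<Sum>i\<in>UNIV. \<Sum>j\<in>UNIV. (C $ i $ j)^2 * (b $ j * d $ j))"
  proof -
    have "trace ((P ** diag_mat b ** transpose P) ** (P ** diag_mat d ** transpose P)) =
          (\<Sum>i\<in>UNIV. \<Sum>j\<in>UNIV. ((mat 1 :: real^'n^'n) $ i $ j)^2 * b $ i * d $ j)"
      unfolding trace_K PP ..
    also have "\<dots> = (\<Sum>j\<in>UNIV. b $ j * d $ j)"
      by (simp add: mat_def if_distrib[of "\<lambda>x. x^2"] delta3
           cong: if_cong)
    also have "\<dots> = (\<Sum>j\<in>UNIV. \<Sum>i\<in>UNIV. (C $ i $ j)^2 * (b $ j * d $ j))"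
      using orth_cols[OF oC] by (simp add: sum_distrib_right[symmetric])
    also have "\<dots> = (\<Sum>i\<in>UNIV. \<Sum>j\<in>UNIV. (C $ i $ j)^2 * (b $ j * d $ j))"
      by (rule sum.swap)
    finally show ?thesis .
  qed
  have t2: "trace ((Q ** diag_mat a ** transpose Q) ** (P ** diag_mat d ** transpose P)) =
           (\<Sum>i\<in>UNIV. \<Sum>j\<in>UNIV. (C $ i $ j)^2 * (a $ i * d $ j))"
    unfolding trace_K C_def by (simp add: mult_ac)
  have t3: "trace ((P ** diag_mat b ** transpose P) ** (Q ** diag_mat c ** transpose Q)) =
           (\<Sum>i\<in>UNIV. \<Sum>j\<in>UNIV. (C $ i $ j)^2 * (b $ j * c $ i))"
    unfolding trace_K tPQ by (subst sum.swap) (simp add: mult_ac)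
  have "(\<Sum>i\<in>UNIV. \<Sum>j\<in>UNIV. (C $ i $ j)^2 * ((a $ i - b $ j) * (c $ i - d $ j))) =
        (\<Sum>i\<in>UNIV. \<Sum>j\<in>UNIV. (C $ i $ j)^2 * (a $ i * c $ i)) -
        (\<Sum>i\<in>UNIV. \<Sum>j\<in>UNIV. (C $ i $ j)^2 * (a $ i * d $ j)) -
        (\<Sum>i\<in>UNIV. \<Sum>j\<in>UNIV. (C $ i $ j)^2 * (b $ j * c $ i)) +
        (\<Sum>i\<in>UNIV. \<Sum>j\<in>UNIV. (C $ i $ j)^2 * (b $ j * d $ j))"
    by (simp add: sum_subtractf[symmetric] sum.distrib[symmetric] algebra_simps)
  moreover have "trace ((Q ** diag_mat a ** transpose Q - P ** diag_mat b ** transpose P) **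
                (Q ** diag_mat c ** transpose Q - P ** diag_mat d ** transpose P)) =
       trace ((Q ** diag_mat a ** transpose Q) ** (Q ** diag_mat c ** transpose Q))
     - trace ((Q ** diag_mat a ** transpose Q) ** (P ** diag_mat d ** transpose P))
     - trace ((P ** diag_mat b ** transpose P) ** (Q ** diag_mat c ** transpose Q))
     + trace ((P ** diag_mat b ** transpose P) ** (P ** diag_mat d ** transpose P))"
    by (simp add: matrix_sub_ldistrib matrix_sub_rdistrib trace_sub)
  ultimately show ?thesis using t1 t2 t3 t4 by simp
qed




lemma ln_aux:
  fixes s :: real assumes s: "1 \<le> s"
  shows "2 * ln s \<le> s - 1/s"
proof -
  have "(\<lambda>x. x - 1/x - 2 * ln x) 1 \<le> (\<lambda>x. x - 1/x - 2 * ln x) s"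
  proof (rule DERIV_nonneg_imp_nondecreasing[OF s])
    fix x :: real assume x: "1 \<le> x" "x \<le> s"
    have "DERIV (\<lambda>x. x - 1/x - 2 * ln x) x :> 1 - (- (1 / x^2)) - 2 * (1/x)"
      using x by (auto intro!: derivative_eq_intros simp: power2_eq_square field_simps)
    moreover have "1 - (- (1 / x^2)) - 2 * (1/x) = (1 - 1/x)^2"
      using x by (simp add: power2_eq_square field_simps)
    ultimately show "\<exists>y. DERIV (\<lambda>x. x - 1/x - 2 * ln x) x :> y \<and> 0 \<le> y" by auto
  qed
  thus ?thesis by simp
qed

lemma log_ineq_ge:
  fixes a b :: real assumes a: "a > 0" and b: "b > 0" and ab: "b \<le> a"
  shows "(ln a - ln b)^2 \<le> - ((a - b) * (1/a - 1/b))"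
proof -
  define s where "s = sqrt (a/b)"
  have s1: "1 \<le> s" unfolding s_def using ab b by simp
  have ss: "s^2 = a/b" unfolding s_def using a b by simp
  have "ln a - ln b = ln (s^2)" using ss a b by (simp add: ln_div)
  also have "\<dots> = 2 * ln s" using s1 by (simp add: ln_realpow)
  finally have e1: "ln a - ln b = 2 * ln s" .
  have "- ((a - b) * (1/a - 1/b)) = a/b - 2 + b/a" using a b by (simp add: field_simps)
  also have "\<dots> = (s - 1/s)^2" using ss s1 a b by (simp add: power2_diff field_simps power2_eq_square)
  finally have e2: "- ((a - b) * (1/a - 1/b)) = (s - 1/s)^2" .
  have "0 \<le> 2 * ln s" using s1 by simp
  hence "(2 * ln s)^2 \<le> (s - 1/s)^2" using ln_aux[OF s1] by (intro power_mono) auto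
  thus ?thesis using e1 e2 by simp
qed

lemma log_ineq:
  fixes a b :: real assumes a: "a > 0" and b: "b > 0"
  shows "(ln a - ln b)^2 \<le> - ((a - b) * (1/a - 1/b))"
proof (cases "b \<le> a")
  case True then show ?thesis using log_ineq_ge a b by blast
next
  case False
  hence "(ln b - ln a)^2 \<le> - ((b - a) * (1/b - 1/a))" using log_ineq_ge a b by simp
  moreover have "(ln b - ln a)^2 = (ln a - ln b)^2" by (rule power2_commute)
  moreover have "(b - a) * (1/b - 1/a) = (a - b) * (1/a - 1/b)" using a b by (simp add: field_simps)
  ultimately show ?thesis by simp
qed




lemma spd_diag:
  fixes A :: "real^'n^'n" assumes "spd A"
  shows "\<exists>Q lam. orthogonal_matrix Q \<and> (\<forall>i. lam $ i > 0) \<and> A = Q ** diag_mat lam ** transpose Q"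
proof -
  have sym: "transpose A = A" and pd: "\<And>x. x \<noteq> 0 \<Longrightarrow> x \<bullet> (A *v x) > 0"
    using assms by (auto simp: spd_def)
  obtain Q lam where oQ: "orthogonal_matrix Q" and AQ: "A ** Q = Q ** diag_mat lam"
    and ev: "\<And>j. A *v column j Q = (lam $ j) *\<^sub>R column j Q" and nc: "\<And>j. norm (column j Q) = 1"
    using spectral[OF sym] unfolding diag_mat_def by blast
  have "A = A ** (Q ** transpose Q)" using oQ by (simp add: orthogonal_matrix_def)
  also have "\<dots> = Q ** diag_mat lam ** transpose Q" by (simp add: matrix_mul_assoc AQ)
  finally have eA: "A = Q ** diag_mat lam ** transpose Q" .
  have "lam $ j > 0" for j
  proof -
    have "column j Q \<noteq> 0" using nc[of j] by auto
    hence "column j Q \<bullet> (A *v column j Q) > 0" by (rule pd)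
    also have "column j Q \<bullet> (A *v column j Q) = lam $ j"
      using ev[of j] nc[of j] by (simp add: norm_eq_1)
    finally show ?thesis .
  qed
  thus ?thesis using oQ eA by blast
qed

lemma mat_log_char:
  fixes A :: "real^'n^'n" assumes "spd A"
  shows "\<exists>Q lam. orthogonal_matrix Q \<and> (\<forall>i. lam $ i > 0) \<and> A = Q ** diag_mat lam ** transpose Q \<and>
       mat_log A = Q ** diag_mat (\<chi> i. ln (lam $ i)) ** transpose Q"
proof -
  define P where "P = (\<lambda>L. \<exists>Q lam. orthogonal_matrix Q \<and> (\<forall>i. lam $ i > 0) \<and>
       A = Q ** diag_mat lam ** transpose Q \<and>
       L = Q ** diag_mat (\<chi> i. ln (lam $ i)) ** transpose Q)"
  have "\<exists>L. P L" using spd_diag[OF assms] unfolding P_def by blast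
  hence "P (SOME L. P L)" by (rule someI_ex)
  thus ?thesis unfolding P_def mat_log_def by blast
qed

lemma inv_char:
  fixes A Q :: "real^'n^'n"
  assumes oQ: "orthogonal_matrix Q" and pos: "\<forall>i. lam $ i > 0" and eA: "A = Q ** diag_mat lam ** transpose Q"
  shows "matrix_inv A = Q ** diag_mat (\<chi> i. 1 / lam $ i) ** transpose Q"
proof -
  define M where "M = Q ** diag_mat (\<chi> i. 1 / lam $ i) ** transpose Q"
  have QQ: "transpose Q ** Q = mat 1" and QQ': "Q ** transpose Q = mat 1"
    using oQ by (simp_all add: orthogonal_matrix_def)
  have one1: "(\<chi> i. lam $ i * (1 / lam $ i)) = (\<chi> i. (1::real))" using pos by (simp add: vec_eq_iff) (metis less_irrefl)
  have one2: "(\<chi> i. 1 / lam $ i * lam $ i) = (\<chi> i. (1::real))" using pos by (simp add: vec_eq_iff) (metis less_irrefl)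
  have "A ** M = Q ** (diag_mat lam ** (transpose Q ** Q) ** diag_mat (\<chi> i. 1 / lam $ i)) ** transpose Q"
    unfolding eA M_def by (simp add: matrix_mul_assoc)
  also have "\<dots> = mat 1" unfolding QQ matrix_mul_rid diag_mult vec_lambda_beta one1 diag_one QQ' ..
  finally have AM: "A ** M = mat 1" .
  have "M ** A = Q ** (diag_mat (\<chi> i. 1 / lam $ i) ** (transpose Q ** Q) ** diag_mat lam) ** transpose Q"
    unfolding eA M_def by (simp add: matrix_mul_assoc)
  also have "\<dots> = mat 1" unfolding QQ matrix_mul_rid diag_mult vec_lambda_beta one2 diag_one QQ' ..
  finally have MA: "M ** A = mat 1" .
  have "\<exists>A'. A ** A' = mat 1 \<and> A' ** A = mat 1" using AM MA by blast
  hence "A ** matrix_inv A = mat 1 \<and> matrix_inv A ** A = mat 1"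
    unfolding matrix_inv_def by (rule someI_ex)
  hence "matrix_inv A = matrix_inv A ** (A ** M)" using AM by simp
  also have "\<dots> = M" using \<open>A ** matrix_inv A = mat 1 \<and> matrix_inv A ** A = mat 1\<close>
    by (simp add: matrix_mul_assoc)
  finally show ?thesis unfolding M_def .
qed

lemma sym_sandwich:
  fixes Q :: "real^'n^'n"
  shows "transpose (Q ** diag_mat a ** transpose Q) = Q ** diag_mat a ** transpose Q"
  by (simp add: matrix_transpose_mul diag_transpose matrix_mul_assoc)

lemma transpose_diff: "transpose ((X::real^'n^'n) - Y) = transpose X - transpose Y"
  by (simp add: transpose_def vec_eq_iff)

theorem mainTheorem5:
  fixes A B :: "real^'n^'n"
  assumes "spd A" and "spd B"
  shows "trace ((mat_log A - mat_log B) ** (mat_log A - mat_log B))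
           \<le> - trace ((A - B) ** (matrix_inv A - matrix_inv B)) \<and>
         \<bar>trace (mat_log A) - trace (mat_log B)\<bar>\<^sup>2
           \<le> - real CARD('n) * trace ((A - B) ** (matrix_inv A - matrix_inv B))"
proof -
  obtain Q lam where oQ: "orthogonal_matrix Q" and pl: "\<forall>i. lam $ i > 0"
    and eA: "A = Q ** diag_mat lam ** transpose Q"
    and lA: "mat_log A = Q ** diag_mat (\<chi> i. ln (lam $ i)) ** transpose Q"
    using mat_log_char[OF assms(1)] by blast
  obtain P mu where oP: "orthogonal_matrix P" and pm: "\<forall>i. mu $ i > 0"
    and eB: "B = P ** diag_mat mu ** transpose P"
    and lB: "mat_log B = P ** diag_mat (\<chi> i. ln (mu $ i)) ** transpose P"
    using mat_log_char[OF assms(2)] by blast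
  define C where "C = transpose Q ** P"
  have iA: "matrix_inv A = Q ** diag_mat (\<chi> i. 1 / lam $ i) ** transpose Q" by (rule inv_char[OF oQ pl eA])
  have iB: "matrix_inv B = P ** diag_mat (\<chi> i. 1 / mu $ i) ** transpose P" by (rule inv_char[OF oP pm eB])
  define M where "M = mat_log A - mat_log B"
  have T1: "trace (M ** M) = (\<Sum>i\<in>UNIV. \<Sum>j\<in>UNIV. (C $ i $ j)^2 * ((ln (lam $ i) - ln (mu $ j)) * (ln (lam $ i) - ln (mu $ j))))"
    unfolding M_def lA lB trace_G[OF oQ oP] C_def by simp
  have T2: "trace ((A - B) ** (matrix_inv A - matrix_inv B)) =
     (\<Sum>i\<in>UNIV. \<Sum>j\<in>UNIV. (C $ i $ j)^2 * ((lam $ i - mu $ j) * (1 / lam $ i - 1 / mu $ j)))"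
    unfolding iA iB trace_G[OF oQ oP, of lam mu, folded eA eB] C_def by simp
  have first: "trace (M ** M) \<le> - trace ((A - B) ** (matrix_inv A - matrix_inv B))"
  proof -
    have "trace (M ** M) \<le> (\<Sum>i\<in>UNIV. \<Sum>j\<in>UNIV. - ((C $ i $ j)^2 * ((lam $ i - mu $ j) * (1 / lam $ i - 1 / mu $ j))))"
      unfolding T1
    proof (intro sum_mono)
      fix i j
      have "(ln (lam $ i) - ln (mu $ j)) * (ln (lam $ i) - ln (mu $ j)) \<le> - ((lam $ i - mu $ j) * (1 / lam $ i - 1 / mu $ j))"
        using log_ineq[of "lam $ i" "mu $ j"] pl pm by (simp add: power2_eq_square)
      hence "(C $ i $ j)^2 * ((ln (lam $ i) - ln (mu $ j)) * (ln (lam $ i) - ln (mu $ j))) \<le>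
             (C $ i $ j)^2 * (- ((lam $ i - mu $ j) * (1 / lam $ i - 1 / mu $ j)))"
        by (rule mult_left_mono) simp
      thus "(C $ i $ j)^2 * ((ln (lam $ i) - ln (mu $ j)) * (ln (lam $ i) - ln (mu $ j))) \<le>
             - ((C $ i $ j)^2 * ((lam $ i - mu $ j) * (1 / lam $ i - 1 / mu $ j)))" by simp
    qed
    also have "\<dots> = - trace ((A - B) ** (matrix_inv A - matrix_inv B))"
      unfolding T2 by (simp add: sum_negf)
    finally show ?thesis .
  qed
  have symM: "transpose M = M" unfolding M_def lA lB transpose_diff sym_sandwich ..
  have "(trace M)^2 \<le> (\<Sum>i\<in>UNIV. (M $ i $ i)^2) * real CARD('n)"
    unfolding trace_def by (rule sum_squared_le_sum_of_squares)
  also have "(\<Sum>i\<in>UNIV. (M $ i $ i)^2) \<le> trace (M ** M)"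
  proof -
    have "trace (M ** M) = (\<Sum>i\<in>UNIV. \<Sum>k\<in>UNIV. (M $ i $ k)^2)"
    proof -
      have "M $ k $ i = M $ i $ k" for i k using symM by (metis transpose_def vec_lambda_beta)
      thus ?thesis unfolding trace_def matrix_matrix_mult_def by (simp add: power2_eq_square)
    qed
    also have "(\<Sum>i\<in>UNIV. (M $ i $ i)^2) \<le> (\<Sum>i\<in>UNIV. \<Sum>k\<in>UNIV. (M $ i $ k)^2)"
      by (intro sum_mono member_le_sum) auto
    finally show ?thesis by simp
  qed
  hence "(\<Sum>i\<in>UNIV. (M $ i $ i)^2) * real CARD('n) \<le> trace (M ** M) * real CARD('n)"
    by (rule mult_right_mono) simp
  also have "\<dots> \<le> (- trace ((A - B) ** (matrix_inv A - matrix_inv B))) * real CARD('n)"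
    using first by (rule mult_right_mono) simp
  finally have second: "(trace M)^2 \<le> - real CARD('n) * trace ((A - B) ** (matrix_inv A - matrix_inv B))"
    by (simp add: mult.commute)
  have "trace M = trace (mat_log A) - trace (mat_log B)" unfolding M_def by (rule trace_sub)
  thus ?thesis using first second unfolding M_def by simp
qed


end
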